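(* Let $(X,\mathscr{R})$ be a closed mixed reaction network with $\mathscr{R}=\mathscr{R}_{\mathrm{rev}}\sqcup\mathscr{R}_{\mathrm{irr}}$. Then $(X,\mathscr{R})$ is strictly thermodynamically sound if and only if no futile cycle contains an irreversible reaction. Here a futile cycle $v$ contains an irreversible reaction if $v_r>0$ for some $r\in\mathscr{R}_{\mathrm{irr}}$.
   Context: A reaction network (RN) $(X,\mathscr{R})$ consists of a finite non-empty set $X$ of species and a finite non-empty set $\mathscr{R}$ of reactions. Each reaction $r$ is given by stoichiometric coefficients $s^-_{xr},s^+_{xr}\in\mathbb{N}_0$. The stoichiometric matrix $S\in\mathbb{Z}^{X\times\mathscr{R}}$ has entries $S_{xr}=s^+_{xr}-s^-_{xr}$. A reaction $r$ is proper if there are $x,y$ with $S_{xr}<0<S_{yr}$, and the RN is closed if all reactions are proper. The reverse $\bar r$ of $r$ has $s^-_{x\bar r}=s^+_{xr}$ and $s^+_{x\bar r}=s^-_{xr}$. A mixed RN has $\mathscr{R}=\mathscr{R}_{\mathrm{rev}}\sqcup\mathscr{R}_{\mathrm{irr}}$, where $r\in\mathscr{R}_{\mathrm{rev}}$ implies $\bar r\in\mathscr{R}_{\mathrm{rev}}$, and $r\in\mathscr{R}_{\mathrm{irr}}$ implies $\bar r\notin\mathscr{R}$. For $v\in\mathbb{R}^{\mathscr{R}}$, $v>0$ means $v$ is componentwise non-negative and nonzero. A futile cycle is a vector $v>0$ with $Sv=0$. For $g\in\mathbb{R}^{\mathscr{R}}$ (reaction energies), $(X,\mathscr{R},g)$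 is thermodynamic if $g\in(\ker S)^\perp$. The mixed RN is strictly thermodynamically sound if, for every $\gamma>1$, there is $g$ with all of the following: - $(X,\mathscr{R},g)$ is thermodynamic; - $|g_r|\le1$ for all $r\in\mathscr{R}_{\mathrm{rev}}$; - $g_r\le-\gamma$ for all $r\in\mathscr{R}_{\mathrm{irr}}$. *)

theory Defs
  imports Main "HOL-Analysis.Analysis"
begin

text \<open>A reaction over species of type 'x is given by its stoichiometric
coefficients (s^-, s^+), i.e. a pair of functions 'x => nat.\<close>

type_synonym 'x reaction = "('x \<Rightarrow> nat) \<times> ('x \<Rightarrow> nat)"

definition reaction_network :: "'x set \<Rightarrow> 'x reaction set \<Rightarrow> bool" where
  "reaction_network X R \<longleftrightarrow> finite X \<and> X \<noteq> {} \<and> finite R \<and> R \<noteq> {} \<and>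
     (\<forall>r\<in>R. \<forall>x. x \<notin> X \<longrightarrow> fst r x = 0 \<and> snd r x = 0)"

definition stoich :: "'x \<Rightarrow> 'x reaction \<Rightarrow> int" where
  "stoich x r = int (snd r x) - int (fst r x)"

definition rev_reaction :: "'x reaction \<Rightarrow> 'x reaction" where
  "rev_reaction r = (snd r, fst r)"

definition proper_reaction :: "'x set \<Rightarrow> 'x reaction \<Rightarrow> bool" where
  "proper_reaction X r \<longleftrightarrow> (\<exists>x\<in>X. \<exists>y\<in>X. stoich x r < 0 \<and> 0 < stoich y r)"

definition closed_RN :: "'x set \<Rightarrow> 'x reaction set \<Rightarrow> bool" where
  "closed_RN X R \<longleftrightarrow> (\<forall>r\<in>R. proper_reaction X r)"

definition mixed_RN :: "'x set \<Rightarrow> 'x reaction set \<Rightarrow> 'x reaction set \<Rightarrow> 'x reaction set \<Rightarrow> bool" where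
  "mixed_RN X R Rrev Rirr \<longleftrightarrow> reaction_network X R \<and>
     R = Rrev \<union> Rirr \<and> Rrev \<inter> Rirr = {} \<and>
     (\<forall>r\<in>Rrev. rev_reaction r \<in> Rrev) \<and>
     (\<forall>r\<in>Rirr. rev_reaction r \<notin> R)"

text \<open>Vectors in R^R are functions 'x reaction => real; only values on R matter.\<close>
definition in_ker_S :: "'x set \<Rightarrow> 'x reaction set \<Rightarrow> ('x reaction \<Rightarrow> real) \<Rightarrow> bool" where
  "in_ker_S X R v \<longleftrightarrow> (\<forall>x\<in>X. (\<Sum>r\<in>R. real_of_int (stoich x r) * v r) = 0)"

definition vec_pos :: "'x reaction set \<Rightarrow> ('x reaction \<Rightarrow> real) \<Rightarrow> bool" where
  "vec_pos R v \<longleftrightarrow> (\<forall>r\<in>R. 0 \<le> v r) \<and> (\<exists>r\<in>R. v r \<noteq> 0)"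

definition futile_cycle :: "'x set \<Rightarrow> 'x reaction set \<Rightarrow> ('x reaction \<Rightarrow> real) \<Rightarrow> bool" where
  "futile_cycle X R v \<longleftrightarrow> vec_pos R v \<and> in_ker_S X R v"

definition thermodynamic :: "'x set \<Rightarrow> 'x reaction set \<Rightarrow> ('x reaction \<Rightarrow> real) \<Rightarrow> bool" where
  "thermodynamic X R g \<longleftrightarrow> (\<forall>v. in_ker_S X R v \<longrightarrow> (\<Sum>r\<in>R. g r * v r) = 0)"

definition strictly_thermodynamically_sound ::
  "'x set \<Rightarrow> 'x reaction set \<Rightarrow> 'x reaction set \<Rightarrow> 'x reaction set \<Rightarrow> bool" where
  "strictly_thermodynamically_sound X R Rrev Rirr \<longleftrightarrow>
     (\<forall>\<gamma>::real. \<gamma> > 1 \<longrightarrow> (\<exists>g. thermodynamic X R g \<and>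
        (\<forall>r\<in>Rrev. \<bar>g r\<bar> \<le> 1) \<and> (\<forall>r\<in>Rirr. g r \<le> - \<gamma>)))"

end

theory Submission
  imports Defs
begin

definition dd :: "'x set \<Rightarrow> ('x \<Rightarrow> real) \<Rightarrow> ('x \<Rightarrow> real) \<Rightarrow> real" where
  "dd X m a = (\<Sum>x\<in>X. m x * a x)"

lemma dd_lin2: "dd X m (\<lambda>x. c * f x - e * g x) = c * dd X m f - e * dd X m g"
  unfolding dd_def by (simp add: algebra_simps sum_subtractf sum_distrib_left)

lemma dd_lin1: "dd X (\<lambda>x. c * f x - e * g x) a = c * dd X f a - e * dd X g a"
  unfolding dd_def by (simp add: algebra_simps sum_subtractf sum_distrib_left)

lemma farkas:
  assumes "finite X" "finite J"
    and "\<not> (\<exists>l. (\<forall>j\<in>J. l j \<ge> 0) \<and> (\<forall>x\<in>X. b x = (\<Sum>j\<in>J. l j * a j x)))"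
  shows "\<exists>m. (\<forall>j\<in>J. dd X m (a j) \<le> 0) \<and> dd X m b > 0"
  using assms(2,3)
proof (induction J arbitrary: a b rule: finite_induct)
  case empty
  then obtain x where x: "x \<in> X" "b x \<noteq> 0" by auto
  have "dd X b b > 0" unfolding dd_def
  proof -
    have "(\<Sum>y\<in>X. b y * b y) \<ge> b x * b x"
      using member_le_sum[of x X "\<lambda>y. b y * b y"] x assms(1) by auto
    moreover have "b x * b x > 0" using x by (auto simp: zero_less_mult_iff linorder_neq_iff)
    ultimately show "(\<Sum>y\<in>X. b y * b y) > 0" by linarith
  qed
  then show ?case by auto
next
  case (insert k J)
  have nJ: "\<not> (\<exists>l. (\<forall>j\<in>J. l j \<ge> 0) \<and> (\<forall>x\<in>X. b x = (\<Sum>j\<in>J. l j * a j x)))"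
  proof
    assume "\<exists>l. (\<forall>j\<in>J. l j \<ge> 0) \<and> (\<forall>x\<in>X. b x = (\<Sum>j\<in>J. l j * a j x))"
    then obtain l where l: "\<forall>j\<in>J. l j \<ge> 0" "\<forall>x\<in>X. b x = (\<Sum>j\<in>J. l j * a j x)" by blast
    let ?l = "l(k := 0)"
    have "\<forall>j\<in>insert k J. ?l j \<ge> 0" using l by auto
    moreover have "\<forall>x\<in>X. b x = (\<Sum>j\<in>insert k J. ?l j * a j x)"
    proof
      fix x assume "x \<in> X"
      have "(\<Sum>j\<in>insert k J. ?l j * a j x) = (\<Sum>j\<in>J. ?l j * a j x)"
        using insert.hyps by simp
      also have "\<dots> = (\<Sum>j\<in>J. l j * a j x)"
        using insert.hyps by (intro sum.cong) auto
      finally show "b x = (\<Sum>j\<in>insert k J. ?l j * a j x)" using l \<open>x\<in>X\<close> by simp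
    qed
    ultimately show False using insert.prems by blast
  qed
  from insert.IH[OF nJ] obtain m where m: "\<forall>j\<in>J. dd X m (a j) \<le> 0" "dd X m b > 0" by blast
  show ?case
  proof (cases "dd X m (a k) \<le> 0")
    case True
    then show ?thesis using m by auto
  next
    case False
    define p where "p = dd X m (a k)"
    have p: "p > 0" using False p_def by simp
    define a' where "a' = (\<lambda>j x. p * a j x - dd X m (a j) * a k x)"
    define b' where "b' = (\<lambda>x. p * b x - dd X m b * a k x)"
    have nb': "\<not> (\<exists>l. (\<forall>j\<in>J. l j \<ge> 0) \<and> (\<forall>x\<in>X. b' x = (\<Sum>j\<in>J. l j * a' j x)))"
    proof
      assume "\<exists>l. (\<forall>j\<in>J. l j \<ge> 0) \<and> (\<forall>x\<in>X. b' x = (\<Sum>j\<in>J. l j * a' j x))"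
      then obtain l where l: "\<forall>j\<in>J. l j \<ge> 0" "\<forall>x\<in>X. b' x = (\<Sum>j\<in>J. l j * a' j x)" by blast
      define s where "s = (\<Sum>j\<in>J. l j * dd X m (a j))"
      have s: "s \<le> 0" unfolding s_def using l(1) m(1)
        by (intro sum_nonpos) (simp add: mult_nonneg_nonpos)
      define L where "L = l(k := (dd X m b - s) / p)"
      have "\<forall>j\<in>insert k J. L j \<ge> 0" using l(1) p s m(2) unfolding L_def by auto
      moreover have "\<forall>x\<in>X. b x = (\<Sum>j\<in>insert k J. L j * a j x)"
      proof
        fix x assume x: "x \<in> X"
        have "(\<Sum>j\<in>insert k J. L j * a j x) = L k * a k x + (\<Sum>j\<in>J. L j * a j x)"
          using insert.hyps by simp
        also have "(\<Sum>j\<in>J. L j * a j x) = (\<Sum>j\<in>J. l j * a j x)"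
          using insert.hyps
          by (intro sum.cong) (auto simp: L_def)
        finally have e1: "(\<Sum>j\<in>insert k J. L j * a j x)
            = (dd X m b - s) / p * a k x + (\<Sum>j\<in>J. l j * a j x)"
          by (simp add: L_def)
        have "p * b x - dd X m b * a k x = (\<Sum>j\<in>J. l j * a' j x)"
          using l(2) x unfolding b'_def by auto
        also have "\<dots> = p * (\<Sum>j\<in>J. l j * a j x) - s * a k x"
          unfolding a'_def s_def
          by (simp add: algebra_simps sum_subtractf sum_distrib_left sum_distrib_right)
        finally have "p * b x = p * (\<Sum>j\<in>J. l j * a j x) + (dd X m b - s) * a k x"
          by (simp add: algebra_simps)
        then have "b x = (p * (\<Sum>j\<in>J. l j * a j x) + (dd X m b - s) * a k x) / p"
          using p by (simp add: eq_divide_eq mult.commute)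
        then have "b x = (dd X m b - s) / p * a k x + (\<Sum>j\<in>J. l j * a j x)"
          using p by (simp add: add_divide_distrib)
        then show "b x = (\<Sum>j\<in>insert k J. L j * a j x)" using e1 by simp
      qed
      ultimately show False using insert.prems by blast
    qed
    from insert.IH[OF nb'] obtain n where
      n: "\<forall>j\<in>J. dd X n (a' j) \<le> 0" "dd X n b' > 0" by blast
    define eta where "eta = (\<lambda>x. p * n x - dd X n (a k) * m x)"
    have "\<forall>j\<in>insert k J. dd X eta (a j) \<le> 0"
    proof
      fix j assume j: "j \<in> insert k J"
      show "dd X eta (a j) \<le> 0"
      proof (cases "j = k")
        case True
        then show ?thesis unfolding eta_def dd_lin1 p_def by simp
      next
        case False
        then have "j \<in> J" using j by auto
        have "dd X eta (a j) = dd X n (a' j)"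
          unfolding eta_def dd_lin1 a'_def dd_lin2 by simp
        then show ?thesis using n(1) \<open>j \<in> J\<close> by simp
      qed
    qed
    moreover have "dd X eta b = dd X n b'"
      unfolding eta_def dd_lin1 b'_def dd_lin2 by simp
    ultimately show ?thesis using n(2) by auto
  qed
qed

theorem theorem3:
  fixes X :: "'x set" and R Rrev Rirr :: "'x reaction set"
  assumes "mixed_RN X R Rrev Rirr"
    and "closed_RN X R"
  shows "strictly_thermodynamically_sound X R Rrev Rirr \<longleftrightarrow>
         \<not> (\<exists>v. futile_cycle X R v \<and> (\<exists>r\<in>Rirr. v r > 0))"
proof
  have rn: "reaction_network X R" and RU: "R = Rrev \<union> Rirr" and dj: "Rrev \<inter> Rirr = {}"
    and revc: "\<forall>r\<in>Rrev. rev_reaction r \<in> Rrev"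
    using assms(1) unfolding mixed_RN_def by auto
  have fX: "finite X" and fR: "finite R" using rn unfolding reaction_network_def by auto
  have fRrev: "finite Rrev" and fRirr: "finite Rirr" using fR RU by auto
  {
    assume sound: "strictly_thermodynamically_sound X R Rrev Rirr"
    show "\<not> (\<exists>v. futile_cycle X R v \<and> (\<exists>r\<in>Rirr. v r > 0))"
    proof
      assume "\<exists>v. futile_cycle X R v \<and> (\<exists>r\<in>Rirr. v r > 0)"
      then obtain v i where fc: "futile_cycle X R v" and i: "i \<in> Rirr" "v i > 0" by blast
      have vpos: "\<forall>r\<in>R. 0 \<le> v r" and ker: "in_ker_S X R v"
        using fc unfolding futile_cycle_def vec_pos_def by auto
      define P where "P = (\<Sum>r\<in>Rrev. v r)"
      define Q where "Q = (\<Sum>r\<in>Rirr. v r)"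
      have P0: "P \<ge> 0" unfolding P_def using vpos RU by (intro sum_nonneg) auto
      have "Q \<ge> v i" unfolding Q_def
        using member_le_sum[of i Rirr v] i vpos RU fRirr by auto
      then have Q0: "Q > 0" using i by simp
      define \<gamma> where "\<gamma> = P / Q + 2"
      have "P / Q \<ge> 0" using P0 Q0 by simp
      then have "\<gamma> > 1" unfolding \<gamma>_def by simp
      then obtain g where th: "thermodynamic X R g" and gr: "\<forall>r\<in>Rrev. \<bar>g r\<bar> \<le> 1"
        and gi: "\<forall>r\<in>Rirr. g r \<le> - \<gamma>"
        using sound unfolding strictly_thermodynamically_sound_def by blast
      have z: "(\<Sum>r\<in>R. g r * v r) = 0" using th ker unfolding thermodynamic_def by blast
      have "(\<Sum>r\<in>R. g r * v r) = (\<Sum>r\<in>Rrev. g r * v r) + (\<Sum>r\<in>Rirr. g r * v r)"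
        unfolding RU using fRrev fRirr dj by (simp add: sum.union_disjoint)
      also have "(\<Sum>r\<in>Rrev. g r * v r) \<le> (\<Sum>r\<in>Rrev. v r)"
      proof (rule sum_mono)
        fix r assume r: "r \<in> Rrev"
        have "0 \<le> v r" using vpos RU r by auto
        moreover have "g r \<le> 1" using gr r by auto
        ultimately show "g r * v r \<le> v r" using mult_right_mono[of "g r" 1 "v r"] by simp
      qed
      also have "(\<Sum>r\<in>Rirr. g r * v r) \<le> (\<Sum>r\<in>Rirr. (- \<gamma>) * v r)"
      proof (rule sum_mono)
        fix r assume r: "r \<in> Rirr"
        have "0 \<le> v r" using vpos RU r by auto
        moreover have "g r \<le> - \<gamma>" using gi r by auto
        ultimately show "g r * v r \<le> (- \<gamma>) * v r" by (rule mult_right_mono[rotated])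
      qed
      also have "(\<Sum>r\<in>Rirr. (- \<gamma>) * v r) = - \<gamma> * Q" unfolding Q_def
        by (simp add: sum_distrib_left)
      finally have "0 \<le> P - \<gamma> * Q" using z unfolding P_def by simp
      moreover have "\<gamma> * Q = P + 2 * Q" unfolding \<gamma>_def using Q0 by (simp add: field_simps)
      ultimately show False using Q0 by simp
    qed
  }
  {
    assume nofc: "\<not> (\<exists>v. futile_cycle X R v \<and> (\<exists>r\<in>Rirr. v r > 0))"
    define a :: "'x reaction \<Rightarrow> 'x \<Rightarrow> real" where "a = (\<lambda>r x. real_of_int (stoich x r))"
    have mu: "\<exists>m. (\<forall>r\<in>R. dd X m (a r) \<le> 0) \<and> dd X m (a i) < 0" if i: "i \<in> Rirr" for i
    proof -
      have "\<not> (\<exists>l. (\<forall>j\<in>R. l j \<ge> 0) \<and> (\<forall>x\<in>X. (- a i x) = (\<Sum>j\<in>R. l j * a j x)))"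
      proof
        assume "\<exists>l. (\<forall>j\<in>R. l j \<ge> 0) \<and> (\<forall>x\<in>X. (- a i x) = (\<Sum>j\<in>R. l j * a j x))"
        then obtain l where l: "\<forall>j\<in>R. l j \<ge> 0" "\<forall>x\<in>X. (- a i x) = (\<Sum>j\<in>R. l j * a j x)"
          by blast
        define v where "v = l(i := l i + 1)"
        have iR: "i \<in> R" using i RU by auto
        have "in_ker_S X R v" unfolding in_ker_S_def
        proof
          fix x assume x: "x \<in> X"
          have "(\<Sum>r\<in>R. real_of_int (stoich x r) * v r) = (\<Sum>r\<in>R. l r * a r x + (if r = i then a i x else 0))"
            by (intro sum.cong) (auto simp: v_def a_def algebra_simps)
          also have "\<dots> = (\<Sum>r\<in>R. l r * a r x) + a i x"
            using iR fR by (simp add: sum.distrib)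
          finally show "(\<Sum>r\<in>R. real_of_int (stoich x r) * v r) = 0" using l(2) x by (metis add.left_inverse)
        qed
        moreover have "vec_pos R v" unfolding vec_pos_def v_def
          using l(1) iR by (auto intro!: bexI[of _ i] add_nonneg_pos)
        moreover have "v i > 0" unfolding v_def using l(1) iR by (simp add: add_nonneg_pos)
        ultimately show False using nofc i unfolding futile_cycle_def by blast
      qed
      from farkas[OF fX fR this] obtain m where
        m: "\<forall>r\<in>R. dd X m (a r) \<le> 0" "dd X m (\<lambda>x. - a i x) > 0" by blast
      have "dd X m (\<lambda>x. - a i x) = - dd X m (a i)" unfolding dd_def by (simp add: sum_negf)
      then show ?thesis using m by auto
    qed
    then obtain M where M: "\<And>i. i \<in> Rirr \<Longrightarrow> (\<forall>r\<in>R. dd X (M i) (a r) \<le> 0) \<and> dd X (M i) (a i) < 0"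
      by metis
    define m where "m = (\<lambda>x. \<Sum>i\<in>Rirr. M i x)"
    define h where "h = (\<lambda>r. dd X m (a r))"
    have hsum: "h r = (\<Sum>i\<in>Rirr. dd X (M i) (a r))" for r
      unfolding h_def m_def dd_def by (simp add: sum_distrib_right sum.swap[of _ X])
    have hle: "h r \<le> 0" if "r \<in> R" for r
      unfolding hsum using M that by (intro sum_nonpos) auto
    have hirr: "h i < 0" if i: "i \<in> Rirr" for i
    proof -
      have "h i = dd X (M i) (a i) + (\<Sum>j\<in>Rirr - {i}. dd X (M j) (a i))"
        unfolding hsum using i fRirr by (simp add: sum.remove)
      moreover have "(\<Sum>j\<in>Rirr - {i}. dd X (M j) (a i)) \<le> 0"
        using M i RU by (intro sum_nonpos) auto
      ultimately show ?thesis using M[OF i] by simp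
    qed
    have stoich_rev: "stoich x (rev_reaction r) = - stoich x r" for x r
      unfolding stoich_def rev_reaction_def by simp
    have hrev: "h r = 0" if r: "r \<in> Rrev" for r
    proof -
      have "h (rev_reaction r) = - h r"
        unfolding h_def a_def dd_def stoich_rev by (simp add: sum_negf)
      moreover have "h (rev_reaction r) \<le> 0" using revc r RU hle by auto
      moreover have "h r \<le> 0" using r RU hle by auto
      ultimately show ?thesis by simp
    qed
    show "strictly_thermodynamically_sound X R Rrev Rirr"
      unfolding strictly_thermodynamically_sound_def
    proof (intro allI impI)
      fix \<gamma> :: real assume g1: "\<gamma> > 1"
      define c where "c = (\<Sum>j\<in>Rirr. \<gamma> / (- h j))"
      define g where "g = (\<lambda>r. c * h r)"
      have "thermodynamic X R g" unfolding thermodynamic_def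
      proof (intro allI impI)
        fix v assume "in_ker_S X R v"
        then have k: "\<forall>x\<in>X. (\<Sum>r\<in>R. real_of_int (stoich x r) * v r) = 0"
          unfolding in_ker_S_def by blast
        have "(\<Sum>r\<in>R. g r * v r) = c * (\<Sum>r\<in>R. \<Sum>x\<in>X. m x * (real_of_int (stoich x r) * v r))"
          unfolding g_def h_def dd_def a_def
          by (simp add: sum_distrib_left sum_distrib_right algebra_simps)
        also have "\<dots> = c * (\<Sum>x\<in>X. m x * (\<Sum>r\<in>R. real_of_int (stoich x r) * v r))"
          by (simp add: sum.swap[of _ R] sum_distrib_left)
        also have "\<dots> = 0" using k by simp
        finally show "(\<Sum>r\<in>R. g r * v r) = 0" .
      qed
      moreover have "\<forall>r\<in>Rrev. \<bar>g r\<bar> \<le> 1" using hrev unfolding g_def by simp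
      moreover have "\<forall>r\<in>Rirr. g r \<le> - \<gamma>"
      proof
        fix i assume i: "i \<in> Rirr"
        have pos: "\<gamma> / (- h j) \<ge> 0" if "j \<in> Rirr" for j using hirr[OF that] g1 by (simp add: divide_pos_neg less_imp_le)
        have "c \<ge> \<gamma> / (- h i)" unfolding c_def
          using member_le_sum[of i Rirr "\<lambda>j. \<gamma> / (- h j)"] i pos fRirr by auto
        then have "c * (- h i) \<ge> \<gamma> / (- h i) * (- h i)"
          using hirr[OF i] by (intro mult_right_mono) auto
        also have "\<gamma> / (- h i) * (- h i) = \<gamma>" using hirr[OF i] by simp
        finally show "g i \<le> - \<gamma>" unfolding g_def by simp
      qed
      ultimately show "\<exists>g. thermodynamic X R g \<and> (\<forall>r\<in>Rrev. \<bar>g r\<bar> \<le> 1) \<and> (\<forall>r\<in>Rirr. g r \<le> - \<gamma>)"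
        by blast
    qed
  }
qed

end
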